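(* Let $W$ be a (1-safe) DAW-net, $\mathrm{bc}(W)$ its $\mathcal{BC}$ encoding, and $\mathit{TS}_{\mathrm{bc}(W)}=(\mathcal{A},S,S_0,\delta)$ the transition system it induces. Then (1) $S_0$ is a singleton $\{s_0\}$; and (2) if $(s,A,s')\in\delta$ then $|A|=1$.
   Context: **DAW-nets.** Data model $\mathcal{D}=(\mathcal{V},\Delta,\mathrm{dm},\mathrm{ord})$ (variables; finite domains via total surjective $\mathrm{dm}$; partial orders on some domains); assignments are partial functions $\eta$ with $\eta(v)\in\mathrm{dm}(v)$; guards $\Phi::=\mathit{true}\mid\mathrm{def}(v)\mid t_1=t_2\mid t_1\le t_2\mid\neg\Phi\mid\Phi\wedge\Phi$. A DAW-net $W=\langle\mathcal{D},(P,T,F),\mathrm{wr},\mathrm{gd}\rangle$: a workflow Petri net with places $\mathit{start},\mathit{sink}$, presets ${}^\bullet t$, postsets $t^\bullet$; partial functions $\mathrm{wr}(t)$ with $\mathrm{wr}(t)(v)\subseteq\mathrm{dm}(v)$; guards $\mathrm{gd}(t)$. $\mathcal{V}'$: finite set of variables of $W$; $\mathrm{adm}(v)=\bigcup_t\mathrm{wr}(t)(v)$. $W$ is assumed 1-safe. **$\mathcal{BC}$ semantics.** Fluents have finite domains; laws: dynamic "$A_0$ after $A'_1,\dots,A'_n$ ifcons $A_{n+1},\dots,A_m$" ($A_0$ an atom $f=v$ or false; $A'_j$ atoms or action constants), static "$A_0$ if ... ifcons ...", "initially $f=v$". $P_\ell(B)$ is the disjunctive program (classical negation $\neg$, default negation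 $\sim$) containing: static laws as $i{:}A_0\leftarrow i{:}A_1,\dots,i{:}A_n,\sim\neg(i{:}A_{n+1}),\dots,\sim\neg(i{:}A_m)$, $0\le i\le\ell$; dynamic laws as $i{+}1{:}A_0\leftarrow i{:}A'_1,\dots,i{:}A'_n,\sim\neg(i{+}1{:}A_{n+1}),\dots,\sim\neg(i{+}1{:}A_m)$, $0\le i<\ell$ (constraints if $A_0$ is false); facts $0{:}f=v$ for "initially $f=v$"; $0{:}f=v\vee\neg(0{:}f=v)$ for all fluents and values; $i{:}a\vee\neg(i{:}a)$ for action constants, $i<\ell$; and for $i\le\ell$ and fluent $f$ with domain $v_1,\dots,v_k$: $\leftarrow\sim(i{:}f=v_1),\dots,\sim(i{:}f=v_k)$ and $\neg(i{:}f=v)\leftarrow i{:}f=w$ ($v\ne w$). For a stable model (answer set) $X$ of $P_\ell(B)$ put $\sigma_i(X)=\{f\mapsto o\mid(i{:}f=o)\in X\}$. $\mathit{TS}_B=(\mathcal{A},S,S_0,\delta)$: $S_0=\{\sigma_0(X)\mid X$ stable model of $P_0(B)\}$; $S,\delta$ least with $S_0\subseteq S$ and, whenever $X$ is a stable model of $P_{\ell+1}(B)$ ($\ell\ge0$) with $\sigma_\ell(X)\in S$, $\sigma_{\ell+1}(X)\in S$ and $(\sigma_\ell(X),\{a\mid(\ell{:}a)\in X\},\sigma_{\ell+1}(X))\in\delta$. **The encoding $\mathrm{bc}(W)$.** Fluents $v\in\mathcal{V}'$ with domain $\mathrm{adm}(v)\cup\{\mathrm{null}\}$, Boolean fluents $p\in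 P$ and $\mathit{trans}$; action constants $t\in T$. Laws: "$v=o$ after $v=o$ ifcons $v=o$"; "$p=o$ after $p=o$ ifcons $p=o$"; for each $t$: "$p=\mathrm{false}$ after $t$" ($p\in{}^\bullet t\setminus t^\bullet$), "$p=\mathrm{true}$ after $t$" ($p\in t^\bullet\setminus{}^\bullet t$), "$v=d$ after $t$ ifcons $v=d$" ($d\in\mathrm{wr}(t)(v)$), "$v=\mathrm{null}$ after $t$" ($\mathrm{wr}(t)(v)=\emptyset$), "false after $t$ ifcons $v=d$" ($\mathrm{wr}(t)(v)\neq\emptyset$, $d\in\{\mathrm{null}\}\cup\mathrm{adm}(v)\setminus\mathrm{wr}(t)(v)$), "false after $t,s$" ($t\ne s$), "false after $t,p=\mathrm{false}$" ($p\in{}^\bullet t$), "$\mathit{trans}=\mathrm{true}$ after $t$"; "initially $\mathit{start}=\mathrm{true}$", "initially $p=\mathrm{false}$" ($p\ne\mathit{start}$), "initially $v=\mathrm{null}$", "initially $\mathit{trans}=\mathrm{true}$"; and for each $t$ with $\mathrm{gd}(t)\not\equiv\mathit{true}$, for a chosen formula $\bigvee_k t^k_1\wedge\dots\wedge t^k_{n_k}$ equivalent to $\neg\mathrm{gd}(t)$ with terms $v=o$ or $\neg\mathrm{def}(v)$, the laws "false after $t,[\![t^k_1]\!],\dots,[\![t^k_{n_k}]\!]$", where $[\![v=o]\!]=(v=o)$, $[\![\neg\mathrm{def}(v)]\!]=(v=\mathrm{null})$. *)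

theory Defs
  imports Main
begin

section \<open>DAW-nets\<close>

datatype ('v,'d) gterm = TVar 'v | TConst 'd

datatype ('v,'d) guard =
    GTrue
  | GDef 'v
  | GEq "('v,'d) gterm" "('v,'d) gterm"
  | GLe "('v,'d) gterm" "('v,'d) gterm"
  | GNot "('v,'d) guard"
  | GAnd "('v,'d) guard" "('v,'d) guard"

datatype ('p,'t) node = Pl 'p | Tr 't

record ('v,'d,'p,'t) dawnet =
  dvars  :: "'v set"
  dm     :: "'v \<Rightarrow> 'd set"                  \<comment> \<open>domain of each variable; \<Delta> = dm ` dvars\<close>
  dord   :: "'d set \<Rightarrow> ('d \<times> 'd) set option"
  places :: "'p set"
  transs :: "'t set"
  flow   :: "(('p,'t) node \<times> ('p,'t) node) set"
  pstart :: "'p"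
  psink  :: "'p"
  wr     :: "'t \<Rightarrow> 'v \<Rightarrow> 'd set option"
  gd     :: "'t \<Rightarrow> ('v,'d) guard"

definition preset :: "('v,'d,'p,'t) dawnet \<Rightarrow> 't \<Rightarrow> 'p set" where
  "preset W t = {p. (Pl p, Tr t) \<in> flow W}"

definition postset :: "('v,'d,'p,'t) dawnet \<Rightarrow> 't \<Rightarrow> 'p set" where
  "postset W t = {p. (Tr t, Pl p) \<in> flow W}"

fun gterm_val :: "('v \<Rightarrow> 'd option) \<Rightarrow> ('v,'d) gterm \<Rightarrow> 'd option" where
  "gterm_val \<eta> (TVar v) = \<eta> v"
| "gterm_val \<eta> (TConst d) = Some d"

text \<open>Comparisons involving an undefined
  variable are false; \<open>t1 \<le> t2\<close> holds iff both values lie in an ordered domain of the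
  data model and are related by its order.\<close>
fun gholds :: "('v,'d,'p,'t) dawnet \<Rightarrow> ('v \<Rightarrow> 'd option) \<Rightarrow> ('v,'d) guard \<Rightarrow> bool" where
  "gholds W \<eta> GTrue = True"
| "gholds W \<eta> (GDef v) = (\<eta> v \<noteq> None)"
| "gholds W \<eta> (GEq a b) = (\<exists>x y. gterm_val \<eta> a = Some x \<and> gterm_val \<eta> b = Some y \<and> x = y)"
| "gholds W \<eta> (GLe a b) = (\<exists>x y D r. gterm_val \<eta> a = Some x \<and> gterm_val \<eta> b = Some y
        \<and> D \<in> dm W ` dvars W \<and> dord W D = Some r \<and> x \<in> D \<and> y \<in> D \<and> (x, y) \<in> r)"
| "gholds W \<eta> (GNot g) = (\<not> gholds W \<eta> g)"
| "gholds W \<eta> (GAnd g h) = (gholds W \<eta> g \<and> gholds W \<eta> h)"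

fun gvars :: "('v,'d) guard \<Rightarrow> 'v set" where
  "gvars GTrue = {}"
| "gvars (GDef v) = {v}"
| "gvars (GEq a b) = {v. TVar v = a \<or> TVar v = b}"
| "gvars (GLe a b) = {v. TVar v = a \<or> TVar v = b}"
| "gvars (GNot g) = gvars g"
| "gvars (GAnd g h) = gvars g \<union> gvars h"

definition assignment :: "('v,'d,'p,'t) dawnet \<Rightarrow> ('v \<Rightarrow> 'd option) \<Rightarrow> bool" where
  "assignment W \<eta> \<longleftrightarrow> dom \<eta> \<subseteq> dvars W \<and> (\<forall>v d. \<eta> v = Some d \<longrightarrow> d \<in> dm W v)"

definition nodes :: "('v,'d,'p,'t) dawnet \<Rightarrow> ('p,'t) node set" where
  "nodes W = Pl ` places W \<union> Tr ` transs W"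

definition daw_net :: "('v,'d,'p,'t) dawnet \<Rightarrow> bool" where
  "daw_net W \<longleftrightarrow>
     \<comment> \<open>data model\<close>
     finite (dvars W) \<and> (\<forall>v \<in> dvars W. finite (dm W v)) \<and>
     (\<forall>D r. dord W D = Some r \<longrightarrow> D \<in> dm W ` dvars W \<and> partial_order_on D r) \<and>
     \<comment> \<open>workflow Petri net\<close>
     finite (places W) \<and> finite (transs W) \<and>
     pstart W \<in> places W \<and> psink W \<in> places W \<and>
     flow W \<subseteq> (Pl ` places W \<times> Tr ` transs W) \<union> (Tr ` transs W \<times> Pl ` places W) \<and>
     (\<forall>x. (x, Pl (pstart W)) \<notin> flow W) \<and> (\<forall>x. (Pl (psink W), x) \<notin> flow W) \<and>
     (\<forall>x \<in> nodes W. (Pl (pstart W), x) \<in> (flow W)\<^sup>* \<and> (x, Pl (psink W)) \<in> (flow W)\<^sup>*) \<and>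
     \<comment> \<open>writes and guards\<close>
     (\<forall>t \<in> transs W. dom (wr W t) \<subseteq> dvars W \<and>
        (\<forall>v D. wr W t v = Some D \<longrightarrow> D \<subseteq> dm W v) \<and> gvars (gd W t) \<subseteq> dvars W)"

type_synonym ('v,'d,'p) dstate = "('p \<Rightarrow> nat) \<times> ('v \<Rightarrow> 'd option)"

definition fires :: "('v,'d,'p,'t) dawnet \<Rightarrow> ('v,'d,'p) dstate \<Rightarrow> 't \<Rightarrow> ('v,'d,'p) dstate \<Rightarrow> bool" where
  "fires W s t s' \<longleftrightarrow> (case (s, s') of ((M, \<eta>), (M', \<eta>')) \<Rightarrow>
     t \<in> transs W \<and> (\<forall>p \<in> preset W t. M p \<ge> 1) \<and> gholds W \<eta> (gd W t) \<and>
     (\<forall>p. M' p = M p - (if p \<in> preset W t then 1 else 0) + (if p \<in> postset W t then 1 else 0)) \<and>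
     (\<forall>v. (wr W t v = None \<longrightarrow> \<eta>' v = \<eta> v) \<and>
          (wr W t v = Some {} \<longrightarrow> \<eta>' v = None) \<and>
          (\<forall>D. wr W t v = Some D \<and> D \<noteq> {} \<longrightarrow> (\<exists>d \<in> D. \<eta>' v = Some d))))"

definition init_dstate :: "('v,'d,'p,'t) dawnet \<Rightarrow> ('v,'d,'p) dstate" where
  "init_dstate W = ((\<lambda>p. if p = pstart W then 1 else 0), Map.empty)"

inductive_set reachable :: "('v,'d,'p,'t) dawnet \<Rightarrow> ('v,'d,'p) dstate set" for W where
  init: "init_dstate W \<in> reachable W"
| step: "s \<in> reachable W \<Longrightarrow> fires W s t s' \<Longrightarrow> s' \<in> reachable W"

definition one_safe :: "('v,'d,'p,'t) dawnet \<Rightarrow> bool" where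
  "one_safe W \<longleftrightarrow> (\<forall>M \<eta> p. (M, \<eta>) \<in> reachable W \<longrightarrow> M p \<le> 1)"

section \<open>The action language BC and its transition system\<close>

datatype ('f,'val,'a) bodyelem = BF 'f 'val | BA 'a

datatype ('f,'val,'a) law =
    Static "('f \<times> 'val) option" "('f \<times> 'val) list" "('f \<times> 'val) list"
      \<comment> \<open>head (None = false), body atoms, ifcons atoms\<close>
  | Dynamic "('f \<times> 'val) option" "('f,'val,'a) bodyelem list" "('f \<times> 'val) list"
      \<comment> \<open>head (None = false), after-part, ifcons atoms\<close>
  | Initially 'f 'val

record ('f,'val,'a) bcdesc =
  fluents :: "'f set"
  fdom    :: "'f \<Rightarrow> 'val set"
  actions :: "'a set"
  laws    :: "('f,'val,'a) law set"

datatype ('f,'val,'a) atom = FA nat 'f 'val | AA nat 'a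

datatype ('f,'val,'a) lit = Pos "('f,'val,'a) atom" | Neg "('f,'val,'a) atom"

text \<open>Disjunctive rule: head (disjunction of literals, empty = constraint),
  positive body, default-negated body.\<close>
datatype 'l rule = Rule (rhead: "'l set") (rpos: "'l set") (rneg: "'l set")

fun lhead :: "nat \<Rightarrow> ('f \<times> 'val) option \<Rightarrow> ('f,'val,'a) lit set" where
  "lhead i None = {}"
| "lhead i (Some (f, v)) = {Pos (FA i f v)}"

definition fpos :: "nat \<Rightarrow> ('f \<times> 'val) list \<Rightarrow> ('f,'val,'a) lit set" where
  "fpos i xs = (\<lambda>(f, v). Pos (FA i f v)) ` set xs"

definition fnegcl :: "nat \<Rightarrow> ('f \<times> 'val) list \<Rightarrow> ('f,'val,'a) lit set" where
  "fnegcl i xs = (\<lambda>(f, v). Neg (FA i f v)) ` set xs"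

fun belit :: "nat \<Rightarrow> ('f,'val,'a) bodyelem \<Rightarrow> ('f,'val,'a) lit" where
  "belit i (BF f v) = Pos (FA i f v)"
| "belit i (BA a) = Pos (AA i a)"

definition prog :: "nat \<Rightarrow> ('f,'val,'a) bcdesc \<Rightarrow> ('f,'val,'a) lit rule set" where
  "prog l B =
     {Rule (lhead i h) (fpos i b) (fnegcl i c) | i h b c. i \<le> l \<and> Static h b c \<in> laws B}
   \<union> {Rule (lhead (Suc i) h) (belit i ` set b) (fnegcl (Suc i) c) | i h b c.
        i < l \<and> Dynamic h b c \<in> laws B}
   \<union> {Rule {Pos (FA 0 f v)} {} {} | f v. Initially f v \<in> laws B}
   \<union> {Rule {Pos (FA 0 f v), Neg (FA 0 f v)} {} {} | f v. f \<in> fluents B \<and> v \<in> fdom B f}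
   \<union> {Rule {Pos (AA i a), Neg (AA i a)} {} {} | i a. i < l \<and> a \<in> actions B}
   \<union> {Rule {} {} ((\<lambda>v. Pos (FA i f v)) ` fdom B f) | i f. i \<le> l \<and> f \<in> fluents B}
   \<union> {Rule {Neg (FA i f v)} {Pos (FA i f w)} {} | i f v w.
        i \<le> l \<and> f \<in> fluents B \<and> v \<in> fdom B f \<and> w \<in> fdom B f \<and> v \<noteq> w}"

definition reduct :: "'l rule set \<Rightarrow> 'l set \<Rightarrow> 'l rule set" where
  "reduct \<Pi> X = {Rule (rhead r) (rpos r) {} | r. r \<in> \<Pi> \<and> rneg r \<inter> X = {}}"

definition is_model :: "'l rule set \<Rightarrow> 'l set \<Rightarrow> bool" where
  "is_model \<Pi> Y \<longleftrightarrow> (\<forall>r \<in> \<Pi>. rpos r \<subseteq> Y \<longrightarrow> rhead r \<inter> Y \<noteq> {})"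

definition consistent :: "('f,'val,'a) lit set \<Rightarrow> bool" where
  "consistent X \<longleftrightarrow> (\<forall>a. \<not> (Pos a \<in> X \<and> Neg a \<in> X))"

definition stable_model :: "('f,'val,'a) lit rule set \<Rightarrow> ('f,'val,'a) lit set \<Rightarrow> bool" where
  "stable_model \<Pi> X \<longleftrightarrow> consistent X \<and> is_model (reduct \<Pi> X) X \<and>
     (\<forall>Y. Y \<subset> X \<longrightarrow> \<not> is_model (reduct \<Pi> X) Y)"

definition sigma :: "nat \<Rightarrow> ('f,'val,'a) lit set \<Rightarrow> ('f \<times> 'val) set" where
  "sigma i X = {(f, x). Pos (FA i f x) \<in> X}"

definition acts :: "nat \<Rightarrow> ('f,'val,'a) lit set \<Rightarrow> 'a set" where
  "acts i X = {a. Pos (AA i a) \<in> X}"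

definition init_states :: "('f,'val,'a) bcdesc \<Rightarrow> ('f \<times> 'val) set set" where
  "init_states B = {sigma 0 X | X. stable_model (prog 0 B) X}"

inductive_set ts_states :: "('f,'val,'a) bcdesc \<Rightarrow> ('f \<times> 'val) set set" for B where
  init: "s \<in> init_states B \<Longrightarrow> s \<in> ts_states B"
| step: "stable_model (prog (Suc l) B) X \<Longrightarrow> sigma l X \<in> ts_states B \<Longrightarrow>
         sigma (Suc l) X \<in> ts_states B"

definition ts_delta :: "('f,'val,'a) bcdesc \<Rightarrow> (('f \<times> 'val) set \<times> 'a set \<times> ('f \<times> 'val) set) set" where
  "ts_delta B = {(sigma l X, acts l X, sigma (Suc l) X) | l X.
                   stable_model (prog (Suc l) B) X \<and> sigma l X \<in> ts_states B}"

section \<open>The encoding bc(W)\<close>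

datatype ('v,'p) fluent = VarF 'v | PlaceF 'p | TransF
datatype 'd fval = Null | BoolV bool | Val 'd

text \<open>Terms of the chosen DNF for the negated guard: \<open>v = o\<close> or \<open>\<not>def(v)\<close>.\<close>
datatype ('v,'d) dlit = DEq 'v 'd | DUndef 'v

fun dlit_holds :: "('v \<Rightarrow> 'd option) \<Rightarrow> ('v,'d) dlit \<Rightarrow> bool" where
  "dlit_holds \<eta> (DEq v x) = (\<eta> v = Some x)"
| "dlit_holds \<eta> (DUndef v) = (\<eta> v = None)"

fun dlit_enc :: "('v,'d) dlit \<Rightarrow> (('v,'p) fluent, 'd fval, 't) bodyelem" where
  "dlit_enc (DEq v x) = BF (VarF v) (Val x)"
| "dlit_enc (DUndef v) = BF (VarF v) Null"

definition guard_trivial :: "('v,'d,'p,'t) dawnet \<Rightarrow> 't \<Rightarrow> bool" where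
  "guard_trivial W t \<longleftrightarrow> (\<forall>\<eta>. assignment W \<eta> \<longrightarrow> gholds W \<eta> (gd W t))"

definition valid_dnf :: "('v,'d,'p,'t) dawnet \<Rightarrow> ('t \<Rightarrow> ('v,'d) dlit list list) \<Rightarrow> bool" where
  "valid_dnf W dnf \<longleftrightarrow> (\<forall>t \<in> transs W. \<not> guard_trivial W t \<longrightarrow>
     (\<forall>\<eta>. assignment W \<eta> \<longrightarrow>
        ((\<exists>c \<in> set (dnf t). \<forall>l \<in> set c. dlit_holds \<eta> l) \<longleftrightarrow> \<not> gholds W \<eta> (gd W t))))"

definition vars' :: "('v,'d,'p,'t) dawnet \<Rightarrow> 'v set" where
  "vars' W = {v. \<exists>t \<in> transs W. v \<in> dom (wr W t) \<or> v \<in> gvars (gd W t)}"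

definition adm :: "('v,'d,'p,'t) dawnet \<Rightarrow> 'v \<Rightarrow> 'd set" where
  "adm W v = \<Union> {D. \<exists>t \<in> transs W. wr W t v = Some D}"

definition bc_fdom :: "('v,'d,'p,'t) dawnet \<Rightarrow> ('v,'p) fluent \<Rightarrow> 'd fval set" where
  "bc_fdom W f = (case f of VarF v \<Rightarrow> Val ` adm W v \<union> {Null} | _ \<Rightarrow> {BoolV True, BoolV False})"

definition bc_laws :: "('v,'d,'p,'t) dawnet \<Rightarrow> ('t \<Rightarrow> ('v,'d) dlit list list)
     \<Rightarrow> (('v,'p) fluent, 'd fval, 't) law set" where
  "bc_laws W dnf =
     {Dynamic (Some (VarF v, x)) [BF (VarF v) x] [(VarF v, x)] | v x.
        v \<in> vars' W \<and> x \<in> bc_fdom W (VarF v)}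
   \<union> {Dynamic (Some (PlaceF p, x)) [BF (PlaceF p) x] [(PlaceF p, x)] | p x.
        p \<in> places W \<and> x \<in> {BoolV True, BoolV False}}
   \<union> {Dynamic (Some (PlaceF p, BoolV False)) [BA t] [] | t p.
        t \<in> transs W \<and> p \<in> preset W t - postset W t}
   \<union> {Dynamic (Some (PlaceF p, BoolV True)) [BA t] [] | t p.
        t \<in> transs W \<and> p \<in> postset W t - preset W t}
   \<union> {Dynamic (Some (VarF v, Val d)) [BA t] [(VarF v, Val d)] | t v D d.
        t \<in> transs W \<and> wr W t v = Some D \<and> d \<in> D}
   \<union> {Dynamic (Some (VarF v, Null)) [BA t] [] | t v.
        t \<in> transs W \<and> wr W t v = Some {}}
   \<union> {Dynamic None [BA t] [(VarF v, d)] | t v D d.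
        t \<in> transs W \<and> wr W t v = Some D \<and> D \<noteq> {} \<and> d \<in> ({Null} \<union> Val ` adm W v) - Val ` D}
   \<union> {Dynamic None [BA t, BA s] [] | t s. t \<in> transs W \<and> s \<in> transs W \<and> t \<noteq> s}
   \<union> {Dynamic None [BA t, BF (PlaceF p) (BoolV False)] [] | t p.
        t \<in> transs W \<and> p \<in> preset W t}
   \<union> {Dynamic (Some (TransF, BoolV True)) [BA t] [] | t. t \<in> transs W}
   \<union> {Initially (PlaceF (pstart W)) (BoolV True)}
   \<union> {Initially (PlaceF p) (BoolV False) | p. p \<in> places W \<and> p \<noteq> pstart W}
   \<union> {Initially (VarF v) Null | v. v \<in> vars' W}
   \<union> {Initially TransF (BoolV True)}
   \<union> {Dynamic None (BA t # map dlit_enc c) [] | t c.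
        t \<in> transs W \<and> \<not> guard_trivial W t \<and> c \<in> set (dnf t)}"

definition bc :: "('v,'d,'p,'t) dawnet \<Rightarrow> ('t \<Rightarrow> ('v,'d) dlit list list)
     \<Rightarrow> (('v,'p) fluent, 'd fval, 't) bcdesc" where
  "bc W dnf = \<lparr> fluents = VarF ` vars' W \<union> PlaceF ` places W \<union> {TransF},
                fdom = bc_fdom W,
                actions = transs W,
                laws = bc_laws W dnf \<rparr>"

end

theory Submission
  imports Defs
begin

lemma sm_support:
  assumes "stable_model P X" "l \<in> X"
  shows "\<exists>r\<in>P. rneg r \<inter> X = {} \<and> rpos r \<subseteq> X \<and> l \<in> rhead r"
proof (rule ccontr)
  assume H: "\<not> ?thesis"
  have "is_model (reduct P X) (X - {l})"
  proof (unfold is_model_def, intro ballI impI)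
    fix r assume r: "r \<in> reduct P X" "rpos r \<subseteq> X - {l}"
    then obtain r' where r': "r = Rule (rhead r') (rpos r') {}" "r' \<in> P" "rneg r' \<inter> X = {}"
      unfolding reduct_def by auto
    have "rhead r \<inter> X \<noteq> {}" using assms(1) r unfolding stable_model_def is_model_def by blast
    moreover have "l \<notin> rhead r" using H r r' by auto
    ultimately show "rhead r \<inter> (X - {l}) \<noteq> {}" by blast
  qed
  moreover have "X - {l} \<subset> X" using assms(2) by blast
  ultimately show False using assms(1) unfolding stable_model_def by blast
qed

lemma sm_apply:
  assumes "stable_model P X" "r \<in> P" "rneg r \<inter> X = {}" "rpos r \<subseteq> X"
  shows "rhead r \<inter> X \<noteq> {}"
proof -
  have "Rule (rhead r) (rpos r) {} \<in> reduct P X" using assms(2,3) unfolding reduct_def by blast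
  then show ?thesis using assms(1,4) unfolding stable_model_def is_model_def by fastforce
qed

lemma lhead_mem: "Pos (FA j f x) \<in> lhead i h \<longleftrightarrow> h = Some (f,x) \<and> j = i"
  by (cases h) auto

lemma lhead_neg: "Neg a \<notin> lhead i h" "Pos (AA j t) \<notin> lhead i h"
  by (cases h; auto)+

lemma no_static: "Static h b c \<notin> bc_laws W dnf"
  unfolding bc_laws_def by auto

lemma dyn_trans: "Dynamic (Some (TransF, x)) b c \<in> bc_laws W dnf \<Longrightarrow> \<exists>t. b = [BA t] \<and> t \<in> transs W"
  unfolding bc_laws_def by auto

lemma dyn_pair: "t \<in> transs W \<Longrightarrow> s \<in> transs W \<Longrightarrow> t \<noteq> s \<Longrightarrow> Dynamic None [BA t, BA s] [] \<in> bc_laws W dnf"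
  unfolding bc_laws_def by blast

definition init_val :: "('v,'d,'p,'t) dawnet \<Rightarrow> ('v,'p) fluent \<Rightarrow> 'd fval" where
  "init_val W f = (case f of PlaceF p \<Rightarrow> BoolV (p = pstart W) | VarF v \<Rightarrow> Null | TransF \<Rightarrow> BoolV True)"

lemma init_iff:
  assumes "pstart W \<in> places W"
  shows "Initially f x \<in> bc_laws W dnf \<longleftrightarrow> f \<in> fluents (bc W dnf) \<and> x = init_val W f"
  using assms unfolding bc_laws_def bc_def init_val_def
  by (cases f) auto

lemma init_dom: "init_val W f \<in> bc_fdom W f"
  unfolding bc_fdom_def init_val_def by (cases f) auto


lemma part2:
  fixes W :: "('v,'d,'p,'t) dawnet" and dnf :: "'t \<Rightarrow> ('v,'d) dlit list list"
  assumes sm: "stable_model (prog (Suc l) (bc W dnf)) X"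
  shows "card (acts l X) = 1"
proof -
  let ?B = "bc W dnf"
  define r0 where "r0 = (Rule {} {} ((\<lambda>v. Pos (FA (Suc l) TransF v)) ` fdom ?B TransF)
       :: (('v,'p) fluent, 'd fval, 't) lit rule)"
  have "r0 \<in> {Rule {} {} ((\<lambda>v. Pos (FA i f v)) ` fdom ?B f) | i f. i \<le> Suc l \<and> f \<in> fluents ?B}"
    unfolding r0_def by (auto simp: bc_def)
  then have "r0 \<in> prog (Suc l) ?B" unfolding prog_def by blast
  then have "rneg r0 \<inter> X \<noteq> {}" using sm_apply[OF sm] unfolding r0_def by fastforce
  then obtain x where x: "Pos (FA (Suc l) TransF x) \<in> X" unfolding r0_def by auto
  from sm_support[OF sm x] obtain r where r: "r \<in> prog (Suc l) ?B" "rpos r \<subseteq> X"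
    "Pos (FA (Suc l) TransF x) \<in> rhead r" by blast
  have "\<exists>t. t \<in> transs W \<and> Pos (AA l t) \<in> X"
    using r by (auto simp: prog_def bc_def lhead_mem no_static dest!: dyn_trans) blast
  then obtain t where t: "t \<in> transs W" "Pos (AA l t) \<in> X" by blast
  have "acts l X = {t}"
  proof (rule ccontr)
    assume "acts l X \<noteq> {t}"
    then obtain s where s: "Pos (AA l s) \<in> X" "s \<noteq> t" using t unfolding acts_def by auto
    from sm_support[OF sm s(1)] obtain r where r: "r \<in> prog (Suc l) ?B"
      "Pos (AA l s) \<in> rhead r" by blast
    have st: "s \<in> transs W"
      using r by (auto simp: prog_def bc_def lhead_neg)
    have "Rule (lhead (Suc l) None) (belit l ` set [BA t, BA s]) (fnegcl (Suc l) [])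
           \<in> {Rule (lhead (Suc i) h) (belit i ` set b) (fnegcl (Suc i) c) | i h b c.
        i < Suc l \<and> Dynamic h b c \<in> laws ?B}"
      apply (simp only: mem_Collect_eq)
      apply (rule exI[where x=l], rule exI[where x=None], rule exI[where x="[BA t, BA s]"], rule exI[where x="[]"])
      using dyn_pair[OF t(1) st] s(2) by (auto simp: bc_def)
    then have "Rule (lhead (Suc l) None) (belit l ` set [BA t, BA s]) (fnegcl (Suc l) [])
           \<in> prog (Suc l) ?B" unfolding prog_def by blast
    from sm_apply[OF sm this] show False using s t by (auto simp: fnegcl_def)
  qed
  then show ?thesis by simp
qed


lemma part1:
  fixes W :: "('v,'d,'p,'t) dawnet" and dnf :: "'t \<Rightarrow> ('v,'d) dlit list list"
  assumes ps: "pstart W \<in> places W"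
  shows "\<exists>s0. init_states (bc W dnf) = {s0}"
proof -
  let ?B = "bc W dnf"
  define S0 where "S0 = {(f, init_val W f) | f. f \<in> fluents ?B}"
  have fact_in: "Rule {Pos (FA 0 f (init_val W f))} {} {} \<in> prog 0 ?B" if "f \<in> fluents ?B" for f
  proof -
    have "Rule {Pos (FA 0 f (init_val W f))} {} {} \<in> {Rule {Pos (FA 0 f v)} {} {} | f v. Initially f v \<in> laws ?B}"
      using init_iff[OF ps, of f "init_val W f" dnf] that by (auto simp: bc_def)
    then show ?thesis unfolding prog_def by blast
  qed
  have choice_in: "Rule {Pos (FA 0 f v), Neg (FA 0 f v)} {} {} \<in> prog 0 ?B"
    if "f \<in> fluents ?B" "v \<in> fdom ?B f" for f v
  proof -
    have "Rule {Pos (FA 0 f v), Neg (FA 0 f v)} {} {} \<in> {Rule {Pos (FA 0 f v), Neg (FA 0 f v)} {} {} | f v. f \<in> fluents ?B \<and> v \<in> fdom ?B f}"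
      using that by blast
    then show ?thesis unfolding prog_def by blast
  qed
  have negr_in: "Rule {Neg (FA 0 f v)} {Pos (FA 0 f w)} {} \<in> prog 0 ?B"
    if "f \<in> fluents ?B" "v \<in> fdom ?B f" "w \<in> fdom ?B f" "v \<noteq> w" for f v w
  proof -
    have "Rule {Neg (FA 0 f v)} {Pos (FA 0 f w)} {} \<in> {Rule {Neg (FA i f v)} {Pos (FA i f w)} {} | i f v w.
        i \<le> 0 \<and> f \<in> fluents ?B \<and> v \<in> fdom ?B f \<and> w \<in> fdom ?B f \<and> v \<noteq> w}"
      using that by blast
    then show ?thesis unfolding prog_def by blast
  qed
  have idom: "init_val W f \<in> fdom ?B f" for f using init_dom[of W f] by (simp add: bc_def)
  have uniq: "sigma 0 X = S0" if sm: "stable_model (prog 0 ?B) X" for X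
  proof
    show sup: "S0 \<subseteq> sigma 0 X"
    proof
      fix p assume "p \<in> S0"
      then obtain f where f: "p = (f, init_val W f)" "f \<in> fluents ?B" unfolding S0_def by blast
      from sm_apply[OF sm fact_in[OF f(2)]] show "p \<in> sigma 0 X" using f(1) by (auto simp: sigma_def)
    qed
    show "sigma 0 X \<subseteq> S0"
    proof
      fix p assume "p \<in> sigma 0 X"
      then obtain f x where p: "p = (f, x)" and fx: "Pos (FA 0 f x) \<in> X" unfolding sigma_def by blast
      from sm_support[OF sm fx] obtain r where r: "r \<in> prog 0 ?B" "Pos (FA 0 f x) \<in> rhead r" by blast
      have "(f \<in> fluents ?B \<and> x = init_val W f) \<or> (f \<in> fluents ?B \<and> x \<in> fdom ?B f)"
        using r init_iff[OF ps, of _ _ dnf]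
        by (auto simp: prog_def lhead_mem no_static bc_def)
      moreover have False if "f \<in> fluents ?B" "x \<in> fdom ?B f" "x \<noteq> init_val W f"
      proof -
        have "Pos (FA 0 f (init_val W f)) \<in> X" using sup that(1) unfolding S0_def sigma_def by blast
        with sm_apply[OF sm negr_in[OF that(1,2) idom that(3)]] have "Neg (FA 0 f x) \<in> X" by auto
        with fx sm show False unfolding stable_model_def consistent_def by blast
      qed
      ultimately show "p \<in> S0" unfolding S0_def p by blast
    qed
  qed
  define X0 where "X0 = ({Pos (FA 0 f (init_val W f)) | f. f \<in> fluents ?B}
     \<union> {Neg (FA 0 f v) | f v. f \<in> fluents ?B \<and> v \<in> fdom ?B f \<and> v \<noteq> init_val W f} :: (('v,'p) fluent, 'd fval, 't) lit set)"
  have s0: "sigma 0 X0 = S0" unfolding X0_def S0_def sigma_def by auto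
  have "stable_model (prog 0 ?B) X0"
    unfolding stable_model_def
  proof (intro conjI allI impI)
    show "consistent X0" unfolding consistent_def X0_def by auto
    show "is_model (reduct (prog 0 ?B) X0) X0"
      unfolding is_model_def
    proof (intro ballI impI)
      fix r assume r: "r \<in> reduct (prog 0 ?B) X0" "rpos r \<subseteq> X0"
      then obtain r' where r': "r = Rule (rhead r') (rpos r') {}" "r' \<in> prog 0 ?B" "rneg r' \<inter> X0 = {}"
        unfolding reduct_def by auto
      have pos: "rpos r' \<subseteq> X0" using r r' by simp
      have inX: "Pos (FA 0 f (init_val W f)) \<in> X0" if "f \<in> fluents ?B" for f
        using that unfolding X0_def by blast
      have lb: "laws ?B = bc_laws W dnf" by (simp add: bc_def)
      have "rhead r' \<inter> X0 \<noteq> {}"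
        using r'(2,3) pos
        apply (simp only: prog_def Un_iff mem_Collect_eq)
        apply (elim disjE exE conjE)
        apply (simp add: lb no_static)
        apply simp
        using inX apply (auto simp: lb init_iff[OF ps])[1]
        apply (force simp: X0_def)
        apply simp
        using inX idom apply force
        apply (auto simp: X0_def)
        done
      then show "rhead r \<inter> X0 \<noteq> {}" using r' by simp
    qed
    fix Y assume Y: "Y \<subset> X0"
    show "\<not> is_model (reduct (prog 0 ?B) X0) Y"
    proof
      assume M: "is_model (reduct (prog 0 ?B) X0) Y"
      have app: "rhead r \<inter> Y \<noteq> {}" if "r \<in> prog 0 ?B" "rneg r = {}" "rpos r = {}" for r
      proof -
        have "Rule (rhead r) (rpos r) {} \<in> reduct (prog 0 ?B) X0" using that unfolding reduct_def by blast
        then show ?thesis using M that unfolding is_model_def by fastforce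
      qed
      have "X0 \<subseteq> Y"
      proof
        fix a assume "a \<in> X0"
        then consider f where "a = Pos (FA 0 f (init_val W f))" "f \<in> fluents ?B"
          | f v where "a = Neg (FA 0 f v)" "f \<in> fluents ?B" "v \<in> fdom ?B f" "v \<noteq> init_val W f"
          unfolding X0_def by blast
        then show "a \<in> Y"
        proof cases
          case 1 then show ?thesis using app[OF fact_in[OF 1(2)]] by auto
        next
          case 2
          have "Pos (FA 0 f v) \<notin> Y" using Y 2 unfolding X0_def by auto
          then show ?thesis using app[OF choice_in[OF 2(2,3)]] 2 by auto
        qed
      qed
      with Y show False by blast
    qed
  qed
  then have "init_states ?B = {S0}" using uniq s0 unfolding init_states_def by auto
  then show ?thesis by blast
qed

theorem mainTheorem5:
  fixes W :: "('v,'d,'p,'t) dawnet"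
    and dnf :: "'t \<Rightarrow> ('v,'d) dlit list list"
  assumes "daw_net W"
    and "one_safe W"
    and "valid_dnf W dnf"
  shows "(\<exists>s0. init_states (bc W dnf) = {s0}) \<and>
         (\<forall>s A s'. (s, A, s') \<in> ts_delta (bc W dnf) \<longrightarrow> card A = 1)"
proof
  have "pstart W \<in> places W" using assms(1) unfolding daw_net_def by blast
  then show "\<exists>s0. init_states (bc W dnf) = {s0}" by (rule part1)
  show "\<forall>s A s'. (s, A, s') \<in> ts_delta (bc W dnf) \<longrightarrow> card A = 1"
    unfolding ts_delta_def using part2 by fastforce
qed

end
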